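(* Let $\widehat\rho:\mathrm{U}(1)\times\mathrm{SU}(2)\to\mathrm{U}(2)$, $(z,A)\mapsto zA$ (a double cover with kernel $\{(1,I_2),(-1,-I_2)\}$). For every group automorphism $\tau$ of $\mathrm{U}(2)$ there is a unique automorphism $\widetilde\tau$ of $\mathrm{U}(1)\times\mathrm{SU}(2)$ such that $\widehat\rho\circ\widetilde\tau=\tau\circ\widehat\rho$.
   Context: $\mathrm{U}(1)=\{z\in\mathbb C\mid |z|=1\}$, identified with the scalar matrices $zI_2$ in $\mathrm{U}(2)$; automorphisms are abstract group automorphisms. *)

theory Defs
  imports "HOL-Analysis.Analysis" "HOL-Algebra.Algebra"
begin

type_synonym cmat2 = "complex^2^2"

definition cadj :: "cmat2 \<Rightarrow> cmat2" where
  "cadj A = (\<chi> i j. cnj (A $ j $ i))"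

definition U2_set :: "cmat2 set" where
  "U2_set = {A. cadj A ** A = mat 1}"

definition SU2_set :: "cmat2 set" where
  "SU2_set = {A. A \<in> U2_set \<and> det A = 1}"

definition U1_set :: "complex set" where
  "U1_set = {z. norm z = 1}"

definition U2_grp :: "cmat2 monoid" where
  "U2_grp = \<lparr>carrier = U2_set, mult = (**), one = mat 1\<rparr>"

definition SU2_grp :: "cmat2 monoid" where
  "SU2_grp = \<lparr>carrier = SU2_set, mult = (**), one = mat 1\<rparr>"

definition U1_grp :: "complex monoid" where
  "U1_grp = \<lparr>carrier = U1_set, mult = (*), one = 1\<rparr>"

definition U1xSU2 :: "(complex \<times> cmat2) monoid" where
  "U1xSU2 = U1_grp \<times>\<times> SU2_grp"

definition rho_hat :: "complex \<times> cmat2 \<Rightarrow> cmat2" where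
  "rho_hat p = mat (fst p) ** snd p"

end

theory Submission
  imports Defs
begin


definition M2 :: "complex \<Rightarrow> complex \<Rightarrow> complex \<Rightarrow> complex \<Rightarrow> cmat2" where
  "M2 a b c d = (\<chi> i j. if i = 1 then (if j = 1 then a else b) else (if j = 1 then c else d))"

lemma two_ne: "(2::2) \<noteq> 1" by simp

lemma vec_eqI2: "(\<And>i j. (A::cmat2) $ i $ j = B $ i $ j) \<Longrightarrow> A = B"
  by (simp add: vec_eq_iff)

lemma M2_nth [simp]:
  "M2 a b c d $ 1 $ 1 = a" "M2 a b c d $ 1 $ 2 = b" "M2 a b c d $ 2 $ 1 = c" "M2 a b c d $ 2 $ 2 = d"
  by (simp_all add: M2_def)

lemma M2_eta: "A = M2 (A$1$1) (A$1$2) (A$2$1) (A$2$2)"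
proof (rule vec_eqI2)
  fix i j :: 2
  show "A $ i $ j = M2 (A$1$1) (A$1$2) (A$2$1) (A$2$2) $ i $ j"
    using exhaust_2[of i] exhaust_2[of j] by auto
qed

lemma M2_eq_iff [simp]: "M2 a b c d = M2 a' b' c' d' \<longleftrightarrow> a = a' \<and> b = b' \<and> c = c' \<and> d = d'"
  using M2_nth by metis

lemma M2_mult [simp]: "M2 a b c d ** M2 e f g h = M2 (a*e+b*g) (a*f+b*h) (c*e+d*g) (c*f+d*h)"
proof (rule vec_eqI2)
  fix i j :: 2
  show "(M2 a b c d ** M2 e f g h) $ i $ j = M2 (a*e+b*g) (a*f+b*h) (c*e+d*g) (c*f+d*h) $ i $ j"
    using exhaust_2[of i] exhaust_2[of j] by (auto simp: matrix_matrix_mult_def sum_2)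
qed

lemma M2_cadj [simp]: "cadj (M2 a b c d) = M2 (cnj a) (cnj c) (cnj b) (cnj d)"
proof (rule vec_eqI2)
  fix i j :: 2
  show "cadj (M2 a b c d) $ i $ j = M2 (cnj a) (cnj c) (cnj b) (cnj d) $ i $ j"
    using exhaust_2[of i] exhaust_2[of j] by (auto simp: cadj_def)
qed

lemma M2_det [simp]: "Determinants.det (M2 a b c d) = a * d - b * c"
  by (simp add: det_2)

lemma M2_mat: "mat z = M2 z 0 0 z"
proof (rule vec_eqI2)
  fix i j :: 2
  show "mat z $ i $ j = M2 z 0 0 z $ i $ j"
    using exhaust_2[of i] exhaust_2[of j] by (auto simp: mat_def)
qed


lemma cadj_mult: "cadj (A ** B) = cadj B ** cadj A"
proof -
  obtain a b c d where A: "A = M2 a b c d" using M2_eta by blast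
  obtain e f g h where B: "B = M2 e f g h" using M2_eta by blast
  show ?thesis unfolding A B by (simp add: algebra_simps)
qed

lemma cadj_cadj [simp]: "cadj (cadj A) = A"
  by (subst (1 2) M2_eta) simp

lemma cadj_mat [simp]: "cadj (mat z) = mat (cnj z)"
  by (simp add: M2_mat)

lemma U2_iff: "A \<in> U2_set \<longleftrightarrow> cadj A ** A = mat 1"
  by (simp add: U2_set_def)

lemma U2_right: "A \<in> U2_set \<Longrightarrow> A ** cadj A = mat 1"
  by (simp add: U2_set_def matrix_left_right_inverse)

lemma U2_cadj: "A \<in> U2_set \<Longrightarrow> cadj A \<in> U2_set"
  by (simp add: U2_set_def matrix_left_right_inverse)

lemma U2_mult: "A \<in> U2_set \<Longrightarrow> B \<in> U2_set \<Longrightarrow> A ** B \<in> U2_set"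
proof -
  assume a: "A \<in> U2_set" and b: "B \<in> U2_set"
  have "cadj (A ** B) ** (A ** B) = cadj B ** ((cadj A ** A) ** B)"
    by (simp add: cadj_mult matrix_mul_assoc)
  also have "\<dots> = mat 1" using a b by (simp add: U2_set_def)
  finally show ?thesis by (simp add: U2_set_def)
qed

lemma U2_one: "mat 1 \<in> U2_set"
  by (simp add: U2_set_def)

lemma U2_det: "A \<in> U2_set \<Longrightarrow> cnj (det A) * det A = 1"
proof -
  assume "A \<in> U2_set"
  then have "det (cadj A ** A) = 1" by (simp add: U2_set_def)
  moreover have "det (cadj A) = cnj (det A)"
    by (subst (1 2) M2_eta) simp
  ultimately show ?thesis by (simp add: det_mul)
qed

lemma mul_cancelL: "A \<in> U2_set \<Longrightarrow> cadj A ** (A ** Z) = Z"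
  by (simp add: matrix_mul_assoc U2_set_def)

lemma mul_cancelR: "A \<in> U2_set \<Longrightarrow> A ** (cadj A ** Z) = Z"
  by (simp add: matrix_mul_assoc U2_right)

lemma su2_form:
  assumes "A \<in> SU2_set"
  shows "A = M2 (A$1$1) (- cnj (A$2$1)) (A$2$1) (cnj (A$1$1))
     \<and> cnj (A$1$1) * A$1$1 + cnj (A$2$1) * A$2$1 = 1"
proof -
  obtain a p b q where A: "A = M2 a p b q" using M2_eta by blast
  have u: "cadj A ** A = mat 1" and d: "a * q - p * b = 1"
    using assms A by (auto simp: SU2_set_def U2_set_def)
  define J where "J = M2 q (-p) (-b) a"
  have AJ: "A ** J = mat 1" using d unfolding A J_def M2_mat by (simp add: algebra_simps)
  have "cadj A = cadj A ** (A ** J)" using AJ by simp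
  also have "\<dots> = J" using u by (simp add: matrix_mul_assoc)
  finally have "cadj A = J" .
  then have e: "cnj a = q" "cnj b = - p" unfolding A J_def by simp_all
  then have "q = cnj a" "p = - cnj b" by simp_all
  moreover have "cnj a * a + cnj b * b = 1" using u unfolding A M2_mat M2_cadj M2_mult M2_eq_iff by simp
  ultimately show ?thesis using A by simp
qed


lemma SU2_mult: "A \<in> SU2_set \<Longrightarrow> B \<in> SU2_set \<Longrightarrow> A ** B \<in> SU2_set"
  by (simp add: SU2_set_def U2_mult det_mul)

lemma SU2_cadj: "A \<in> SU2_set \<Longrightarrow> cadj A \<in> SU2_set"
proof -
  assume a: "A \<in> SU2_set"
  have "det (cadj A) = cnj (det A)" by (subst (1 2) M2_eta) simp
  then show ?thesis using a by (simp add: SU2_set_def U2_cadj)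
qed

lemma comm_abstract:
  assumes U: "U \<in> U2_set" and AU: "A ** U = U ** M2 l 0 0 (cnj l)" and l: "cnj l * l = 1"
  shows "\<exists>V W. V \<in> SU2_set \<and> W \<in> SU2_set \<and> A = V ** (W ** (cadj V ** cadj W))"
proof -
  define m where "m = csqrt l"
  have mm: "m * m = l" unfolding m_def by (metis power2_csqrt power2_eq_square)
  have nl: "norm l = 1" using l by (metis complex_norm_square mult.commute norm_one of_real_eq_1_iff power2_eq_square abs_norm_cancel real_sqrt_abs real_sqrt_one)
  have nm: "cnj m * m = 1" 
  proof -
    have "norm m = 1" unfolding m_def using nl by simp
    then show ?thesis by (metis complex_norm_square mult.commute of_real_1 power_one)
  qed
  define D0 where "D0 = M2 m 0 0 (cnj m)"
  define S where "S = M2 0 (-1) 1 0"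
  define V where "V = U ** (D0 ** cadj U)"
  define W where "W = U ** (S ** cadj U)"
  have dU: "cnj (det U) * det U = 1" using U2_det[OF U] .
  have dcU: "det (cadj U) = cnj (det U)" by (subst (1 2) M2_eta) simp
  have D0: "D0 \<in> SU2_set" unfolding D0_def SU2_set_def U2_set_def M2_mat using nm
    by (simp add: mult.commute)
  have S: "S \<in> SU2_set" unfolding S_def SU2_set_def U2_set_def M2_mat by simp
  have conjSU: "U ** (Z ** cadj U) \<in> SU2_set" if "Z \<in> SU2_set" for Z
  proof -
    have "U ** (Z ** cadj U) \<in> U2_set" using that U by (simp add: U2_mult U2_cadj SU2_set_def)
    moreover have "det (U ** (Z ** cadj U)) = 1" using that dU dcU
      by (simp add: det_mul SU2_set_def mult.commute)
    ultimately show ?thesis by (simp add: SU2_set_def)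
  qed
  have V: "V \<in> SU2_set" unfolding V_def using conjSU D0 .
  have W: "W \<in> SU2_set" unfolding W_def using conjSU S .
  have key: "D0 ** (S ** (cadj D0 ** cadj S)) = M2 l 0 0 (cnj l)"
    unfolding D0_def S_def using mm by (simp flip: complex_cnj_mult)
  have "V ** (W ** (cadj V ** cadj W)) = U ** (D0 ** (S ** (cadj D0 ** (cadj S ** cadj U))))"
    unfolding V_def W_def by (simp add: cadj_mult mul_cancelL[OF U] flip: matrix_mul_assoc)
  also have "\<dots> = U ** (M2 l 0 0 (cnj l) ** cadj U)"
  proof -
    have "D0 ** (S ** (cadj D0 ** (cadj S ** cadj U))) = (D0 ** (S ** (cadj D0 ** cadj S))) ** cadj U"
      by (simp add: matrix_mul_assoc)
    then show ?thesis using key by simp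
  qed
  also have "\<dots> = A ** (U ** cadj U)" using AU by (simp add: matrix_mul_assoc)
  also have "\<dots> = A" using U2_right[OF U] by simp
  finally show ?thesis using V W by metis
qed




lemma na: assumes "cnj a * a + cnj b * b = 1" shows "norm a ^ 2 + norm b ^ 2 = 1"
proof -
  have "complex_of_real (norm a ^ 2 + norm b ^ 2) = 1"
    unfolding of_real_add complex_norm_square using assms by (simp add: mult.commute)
  then show ?thesis using of_real_eq_1_iff by blast
qed

lemma l1: "\<bar>t\<bar> \<le> norm (a::complex) \<Longrightarrow> t^2 \<le> norm a ^ 2" 
  by (metis abs_ge_zero power2_abs power_mono)
lemma l2: "t^2 \<le> norm (a::complex) ^ 2 \<Longrightarrow> norm a ^ 2 + norm (b::complex) ^ 2 = 1 \<Longrightarrow> t^2 \<le> (1::real)"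
  by (smt (verit) zero_le_power2)
lemma l3: "Complex (Re a) s + cnj (Complex (Re a) s) = a + cnj a" by (simp add: complex_add_cnj complex_eq_iff)
lemma l4: "s^2 = 1 - t^2 \<Longrightarrow> cnj (Complex t s) * Complex t s = 1" by (simp add: complex_eq_iff power2_eq_square)
lemma l5: "b \<noteq> 0 \<Longrightarrow> sqrt (norm b ^ 2 + norm (a - l) ^ 2) > 0" by (simp add: add_pos_nonneg)
lemma l6: "cnj b * b + cnj (a - l) * (a - l) = complex_of_real ((sqrt (norm b ^ 2 + norm (a - l) ^ 2))^2)"
proof -
  have "(sqrt (norm b ^ 2 + norm (a - l) ^ 2))^2 = norm b ^ 2 + norm (a - l) ^ 2" by simp
  then have "complex_of_real ((sqrt (norm b ^ 2 + norm (a - l) ^ 2))^2) = b * cnj b + (a - l) * cnj (a - l)"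
    by (simp only: of_real_add complex_norm_square)
  then show ?thesis by (simp add: mult.commute)
qed

lemma e1g: fixes a b l ca cb cl :: complex
  assumes "ca * a + cb * b = 1" "l + cl = a + ca" "cl * l = 1"
  shows "b * cb + ca * (a - l) = (a - l) * l"
proof -
  have "b * cb + ca * (a - l) = 1 - ca * l" using assms(1) by (simp add: algebra_simps)
  also have "\<dots> = cl * l - ca * l" using assms(3) by simp
  also have "\<dots> = (a - l) * l" using assms(2) proof -
    have c: "ca = l + cl - a" using assms(2) add_diff_cancel_left'[of a ca] by simp
    show ?thesis unfolding c by (simp add: algebra_simps)
  qed
  finally show ?thesis .
qed
lemma e2g: fixes a b l ca cb cl :: complex
  assumes "ca * a + cb * b = 1" "l + cl = a + ca" "cl * l = 1"
  shows "a * (-(ca - cl)) - cb * b = -(ca - cl) * cl"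
proof -
  have "a * (-(ca - cl)) - cb * b = a * cl - 1" using assms(1) by (simp add: algebra_simps)
  also have "\<dots> = a * cl - cl * l" using assms(3) by simp
  also have "\<dots> = -(ca - cl) * cl" using assms(2) proof -
    have c: "ca = l + cl - a" using assms(2) add_diff_cancel_left'[of a ca] by simp
    show ?thesis unfolding c by (simp add: algebra_simps)
  qed
  finally show ?thesis .
qed

lemma comm_SU2:
  assumes A: "A \<in> SU2_set"
  shows "\<exists>V W. V \<in> SU2_set \<and> W \<in> SU2_set \<and> A = V ** (W ** (cadj V ** cadj W))"
proof -
  define a where "a = A$1$1"
  define b where "b = A$2$1"
  have Af: "A = M2 a (- cnj b) b (cnj a)" and ab: "cnj a * a + cnj b * b = 1"
    using su2_form[OF A] unfolding a_def b_def by auto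
  show ?thesis
  proof (cases "b = 0")
    case True
    then have "cnj a * a = 1" using ab by simp
    moreover have "A ** mat 1 = mat 1 ** M2 a 0 0 (cnj a)" using Af True by simp
    ultimately show ?thesis using comm_abstract[OF U2_one] by blast
  next
    case False
    define t where "t = Re a"
    have na: "norm a ^ 2 + norm b ^ 2 = 1" using na[OF ab] .
    have t2: "t^2 \<le> 1"
      using l2[OF l1[OF abs_Re_le_cmod] na] unfolding t_def .
    define s where "s = sqrt (1 - t^2)"
    have s2: "s^2 = 1 - t^2" unfolding s_def using t2 by simp
    define l where "l = Complex t s"
    have H2: "l + cnj l = a + cnj a" unfolding l_def t_def by (rule l3)
    have H3: "cnj l * l = 1" unfolding l_def using s2 by (rule l4)
    define nr where "nr = sqrt (norm b ^ 2 + norm (a - l) ^ 2)"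
    have nrpos: "nr > 0" unfolding nr_def using False by (rule l5)
    define k where "k = complex_of_real (1 / nr)"
    have kk: "k * k * (cnj b * b + cnj (a - l) * (a - l)) = 1"
    proof -
      have "cnj b * b + cnj (a - l) * (a - l) = complex_of_real (nr^2)"
        unfolding nr_def by (rule l6)
      then show ?thesis unfolding k_def using nrpos by (simp add: power2_eq_square field_simps)
    qed
    have ck: "cnj k = k" unfolding k_def by simp
    define U where "U = M2 (cnj b * k) (- (cnj a - cnj l) * k) ((a - l) * k) (b * k)"
    have U: "U \<in> U2_set" 
    proof -
      have "cadj U ** U = M2 (k * k * (cnj b * b + cnj (a - l) * (a - l))) 0 0 (k * k * (cnj b * b + cnj (a - l) * (a - l)))"
        unfolding U_def using ck by (simp add: algebra_simps)
      then show ?thesis using kk by (simp add: U2_set_def M2_mat)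
    qed
    have AU: "A ** U = U ** M2 l 0 0 (cnj l)"
    proof -
      have e1: "b * cnj b + cnj a * (a - l) = (a - l) * l" by (rule e1g[OF ab H2 H3])
      have e2: "a * (-(cnj a - cnj l)) - cnj b * b = -(cnj a - cnj l) * cnj l" by (rule e2g[OF ab H2 H3])
      have e1': "b * cnj b * k + cnj a * (a - l) * k = (a - l) * l * k" using e1 by (metis distrib_right)
      have e2': "a * (-(cnj a - cnj l)) * k - cnj b * b * k = -(cnj a - cnj l) * cnj l * k" using e2 by (metis left_diff_distrib)
      show ?thesis unfolding Af U_def M2_mult M2_eq_iff using e1' e2' by (simp add: algebra_simps)
    qed
    show ?thesis using comm_abstract[OF U AU H3] .
  qed
qed




lemma comm_det:
  assumes "V \<in> U2_set" "W \<in> U2_set"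
  shows "det (V ** (W ** (cadj V ** cadj W))) = 1"
proof -
  have dc: "det (cadj Z) = cnj (det Z)" for Z by (subst (1 2) M2_eta) simp
  have "det (V ** (W ** (cadj V ** cadj W))) = (cnj (det V) * det V) * (cnj (det W) * det W)"
    by (simp add: det_mul dc algebra_simps)
  then show ?thesis using U2_det[OF assms(1)] U2_det[OF assms(2)] by simp
qed

lemma mat_U2: "mat z \<in> U2_set \<longleftrightarrow> z \<in> U1_set"
proof -
  have "mat z \<in> U2_set \<longleftrightarrow> cnj z * z = 1" by (simp add: U2_set_def M2_mat)
  also have "\<dots> \<longleftrightarrow> norm z = 1"
  proof
    assume "cnj z * z = 1"
    note e = this
    have "complex_of_real (norm z ^ 2) = z * cnj z" by (rule complex_norm_square)
    also have "\<dots> = 1" using e by (simp add: mult.commute)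
    finally have "norm z ^ 2 = 1" using of_real_eq_1_iff by blast
    then show "norm z = 1" using norm_ge_zero[of z] by (auto simp add: power2_eq_1_iff)
  next
    assume "norm z = 1"
    then have "complex_of_real (norm z ^ 2) = 1" by simp
    then have "z * cnj z = 1" by (simp only: complex_norm_square)
    then show "cnj z * z = 1" by (simp add: mult.commute)
  qed
  finally show ?thesis by (simp add: U1_set_def)
qed

lemma mat_comm: "mat (z::complex) ** (xm::cmat2) = xm ** mat z"
  by (subst (1 2) M2_eta) (simp add: M2_mat mult.commute)

lemma central:
  assumes "\<And>xm. xm \<in> U2_set \<Longrightarrow> M ** xm = xm ** M"
  shows "M = mat (M$1$1)"
proof -
  obtain a b c d where M: "M = M2 a b c d" using M2_eta by blast
  have k1: "M2 1 0 0 (-1) \<in> U2_set" "M2 0 1 1 0 \<in> U2_set" by (simp_all add: U2_set_def M2_mat)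
  have e1: "M2 a b c d ** M2 1 0 0 (-1) = M2 1 0 0 (-1) ** M2 a b c d" using assms[OF k1(1)] by (simp only: M)
  have e2: "M2 a b c d ** M2 0 1 1 0 = M2 0 1 1 0 ** M2 a b c d" using assms[OF k1(2)] by (simp only: M)
  have e1': "M2 a (-b) c (-d) = M2 a b (-c) (-d)" using e1
    by (simp only: M2_mult mult_zero_left mult_zero_right mult_1_left mult_1_right add_0_left add_0_right mult_minus1_right mult_minus1)
  have e2': "M2 b a d c = M2 c d a b" using e2
    by (simp only: M2_mult mult_zero_left mult_zero_right mult_1_left mult_1_right add_0_left add_0_right)
  have "- b = b" "c = - c" using e1'[unfolded M2_eq_iff] by blast+
  then have bc: "b = 0" "c = 0" by (simp_all add: neg_equal_iff_equal add_eq_0_iff2)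
  have "b = c" "a = d" using e2'[unfolded M2_eq_iff] by blast+
  then show ?thesis using bc unfolding M M2_mat by simp
qed

lemma mat_mat: "(mat z :: cmat2) ** mat w = mat (z * w)"
  by (simp add: M2_mat)

lemma mat_inj: "(mat z :: cmat2) = mat w \<longleftrightarrow> z = w"
  by (simp add: M2_mat)

lemma iso_facts:
  assumes "\<tau> \<in> iso U2_grp U2_grp"
  shows "\<And>xm. xm \<in> U2_set \<Longrightarrow> \<tau> xm \<in> U2_set"
    and "\<And>xm ym. xm \<in> U2_set \<Longrightarrow> ym \<in> U2_set \<Longrightarrow> \<tau> (xm ** ym) = \<tau> xm ** \<tau> ym"
    and "inj_on \<tau> U2_set" and "\<tau> ` U2_set = U2_set"
  using assms by (auto simp: iso_def hom_def U2_grp_def bij_betw_def)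

lemma tau_one:
  assumes t: "\<tau> \<in> iso U2_grp U2_grp"
  shows "\<tau> (mat 1) = mat 1"
proof -
  note f = iso_facts[OF t]
  have u: "\<tau> (mat 1) \<in> U2_set" using f(1) U2_one by blast
  have "\<tau> (mat 1) = \<tau> (mat 1) ** \<tau> (mat 1)" using f(2)[OF U2_one U2_one] by simp
  then have "cadj (\<tau> (mat 1)) ** \<tau> (mat 1) = cadj (\<tau> (mat 1)) ** (\<tau> (mat 1) ** \<tau> (mat 1))" by simp
  then show ?thesis using u by (simp add: mul_cancelL U2_set_def)
qed

lemma tau_cadj:
  assumes t: "\<tau> \<in> iso U2_grp U2_grp" and xm: "xm \<in> U2_set"
  shows "\<tau> (cadj xm) = cadj (\<tau> xm)"
proof -
  note f = iso_facts[OF t]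
  have u: "\<tau> xm \<in> U2_set" using f(1) xm by blast
  have "\<tau> (cadj xm) ** \<tau> xm = mat 1"
    using f(2)[OF U2_cadj[OF xm] xm] tau_one[OF t] xm by (simp add: U2_set_def)
  then have "\<tau> (cadj xm) ** (\<tau> xm ** cadj (\<tau> xm)) = cadj (\<tau> xm)" by (simp add: matrix_mul_assoc)
  then show ?thesis using U2_right[OF u] by simp
qed

lemma tau_comm:
  assumes t: "\<tau> \<in> iso U2_grp U2_grp" and V: "V \<in> U2_set" and W: "W \<in> U2_set"
  shows "\<tau> (V ** (W ** (cadj V ** cadj W))) = \<tau> V ** (\<tau> W ** (cadj (\<tau> V) ** cadj (\<tau> W)))"
  using iso_facts(2)[OF t] V W U2_cadj U2_mult tau_cadj[OF t] by simp

lemma tau_SU2: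
  assumes t: "\<tau> \<in> iso U2_grp U2_grp" and A: "A \<in> SU2_set"
  shows "\<tau> A \<in> SU2_set"
proof -
  obtain V W where VW: "V \<in> SU2_set" "W \<in> SU2_set" and A: "A = V ** (W ** (cadj V ** cadj W))"
    using comm_SU2[OF A] by blast
  have VW': "V \<in> U2_set" "W \<in> U2_set" using VW by (auto simp: SU2_set_def)
  have "\<tau> A = \<tau> V ** (\<tau> W ** (cadj (\<tau> V) ** cadj (\<tau> W)))" unfolding A by (rule tau_comm[OF t VW'])
  moreover have "\<tau> V \<in> U2_set" "\<tau> W \<in> U2_set" using iso_facts(1)[OF t] VW' by auto
  ultimately show ?thesis using comm_det U2_mult U2_cadj by (simp add: SU2_set_def)
qed

lemma tau_scalar:
  assumes t: "\<tau> \<in> iso U2_grp U2_grp" and z: "z \<in> U1_set"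
  shows "\<tau> (mat z) = mat (\<tau> (mat z) $ 1 $ 1)"
proof (rule central)
  note f = iso_facts[OF t]
  fix ym assume ym: "ym \<in> U2_set"
  then obtain xm where xm: "xm \<in> U2_set" "ym = \<tau> xm" using f(4) by blast
  have mz: "mat z \<in> U2_set" using z mat_U2 by blast
  show "\<tau> (mat z) ** ym = ym ** \<tau> (mat z)"
    unfolding xm(2) using f(2)[OF mz xm(1)] f(2)[OF xm(1) mz] mat_comm by metis
qed




lemma UP_carrier: "carrier U1xSU2 = U1_set \<times> SU2_set"
  by (simp add: U1xSU2_def U1_grp_def SU2_grp_def)

lemma UP_mult: "p \<otimes>\<^bsub>U1xSU2\<^esub> q = (fst p * fst q, snd p ** snd q)"
  by (cases p, cases q) (simp add: U1xSU2_def U1_grp_def SU2_grp_def)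

lemma U1_mult: "z \<in> U1_set \<Longrightarrow> y \<in> U1_set \<Longrightarrow> z * y \<in> U1_set"
  by (simp add: U1_set_def norm_mult)

lemma U1_nz: "z \<in> U1_set \<Longrightarrow> z \<noteq> 0"
  by (auto simp: U1_set_def)

lemma SU2_U2: "A \<in> SU2_set \<Longrightarrow> A \<in> U2_set"
  by (simp add: SU2_set_def)

lemma SU2_one: "mat 1 \<in> SU2_set"
  by (simp add: SU2_set_def U2_one)

lemma U1_one: "1 \<in> U1_set"
  by (simp add: U1_set_def)

lemma det_scal: "det (mat z ** A) = z * z * det (A::cmat2)"
  by (subst (1 2) M2_eta) (simp add: M2_mat algebra_simps)

lemma hom_UP:
  assumes "\<sigma> \<in> hom U1xSU2 U1xSU2"
  shows "\<And>p. p \<in> U1_set \<times> SU2_set \<Longrightarrow> \<sigma> p \<in> U1_set \<times> SU2_set"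
    and "\<And>p q. p \<in> U1_set \<times> SU2_set \<Longrightarrow> q \<in> U1_set \<times> SU2_set \<Longrightarrow>
           \<sigma> (fst p * fst q, snd p ** snd q) = (fst (\<sigma> p) * fst (\<sigma> q), snd (\<sigma> p) ** snd (\<sigma> q))"
  using assms unfolding hom_def UP_carrier[symmetric] UP_mult[symmetric] by auto




theorem mainTheorem13:
  assumes "\<tau> \<in> iso U2_grp U2_grp"
  shows "\<exists>\<tau>'. \<tau>' \<in> iso U1xSU2 U1xSU2
              \<and> (\<forall>p \<in> carrier U1xSU2. rho_hat (\<tau>' p) = \<tau> (rho_hat p))
              \<and> (\<forall>\<sigma>. \<sigma> \<in> iso U1xSU2 U1xSU2
                     \<and> (\<forall>p \<in> carrier U1xSU2. rho_hat (\<sigma> p) = \<tau> (rho_hat p))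
                     \<longrightarrow> (\<forall>p \<in> carrier U1xSU2. \<sigma> p = \<tau>' p))"
proof -
  note t = assms
  note f = iso_facts[OF t]
  define w where "w z = \<tau> (mat z) $ 1 $ 1" for z
  have wz: "\<tau> (mat z) = mat (w z)" if "z \<in> U1_set" for z
    unfolding w_def using tau_scalar[OF t that] .
  have wU1: "w z \<in> U1_set" if z: "z \<in> U1_set" for z
  proof -
    have "mat z \<in> U2_set" using z mat_U2 by blast
    then have "mat (w z) \<in> U2_set" using f(1) wz[OF z] by metis
    then show ?thesis using mat_U2 by blast
  qed
  have wmult: "w (z * y) = w z * w y" if z: "z \<in> U1_set" and y: "y \<in> U1_set" for z y
  proof -
    have mz: "mat z \<in> U2_set" "mat y \<in> U2_set" using z y mat_U2 by blast+
    have "mat (w (z * y)) = \<tau> (mat (z * y))" using wz[OF U1_mult[OF z y]] by simp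
    also have "\<dots> = \<tau> (mat z ** mat y)" by (simp add: mat_mat)
    also have "\<dots> = mat (w z) ** mat (w y)" using f(2)[OF mz] wz[OF z] wz[OF y] by simp
    also have "\<dots> = mat (w z * w y)" by (simp add: mat_mat)
    finally show ?thesis by (simp add: mat_inj)
  qed
  define \<tau>' where "\<tau>' p = (w (fst p), \<tau> (snd p))" for p
  have carr: "\<tau>' p \<in> U1_set \<times> SU2_set" if "p \<in> U1_set \<times> SU2_set" for p
    using that wU1 tau_SU2[OF t] unfolding \<tau>'_def by (auto)
  have rho: "rho_hat (\<tau>' p) = \<tau> (rho_hat p)" if p: "p \<in> carrier U1xSU2" for p
  proof -
    obtain z A where pz: "p = (z, A)" "z \<in> U1_set" "A \<in> SU2_set" using p UP_carrier by auto
    have mz: "mat z \<in> U2_set" using pz mat_U2 by blast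
    have "rho_hat (\<tau>' p) = mat (w z) ** \<tau> A" unfolding \<tau>'_def rho_hat_def pz by simp
    also have "\<dots> = \<tau> (mat z) ** \<tau> A" using wz[OF pz(2)] by simp
    also have "\<dots> = \<tau> (mat z ** A)" using f(2)[OF mz SU2_U2[OF pz(3)]] by simp
    finally show ?thesis unfolding rho_hat_def pz by simp
  qed
  have hom: "\<tau>' \<in> hom U1xSU2 U1xSU2"
    unfolding hom_def UP_carrier
  proof (intro CollectI conjI ballI)
    show "\<tau>' \<in> U1_set \<times> SU2_set \<rightarrow> U1_set \<times> SU2_set" using carr by blast
  next
    fix p q assume p: "p \<in> U1_set \<times> SU2_set" and q: "q \<in> U1_set \<times> SU2_set"
    show "\<tau>' (p \<otimes>\<^bsub>U1xSU2\<^esub> q) = \<tau>' p \<otimes>\<^bsub>U1xSU2\<^esub> \<tau>' q"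
      unfolding UP_mult \<tau>'_def using p q wmult f(2) SU2_U2 by auto
  qed
  have inj: "inj_on \<tau>' (U1_set \<times> SU2_set)"
  proof (rule inj_onI)
    fix p q assume p: "p \<in> U1_set \<times> SU2_set" and q: "q \<in> U1_set \<times> SU2_set" and e: "\<tau>' p = \<tau>' q"
    have "w (fst p) = w (fst q)" "\<tau> (snd p) = \<tau> (snd q)" using e unfolding \<tau>'_def by auto
    then have eq: "\<tau> (mat (fst p)) = \<tau> (mat (fst q))" using wz p q by auto
    have m1: "mat (fst p) \<in> U2_set" and m2: "mat (fst q) \<in> U2_set" using p q mat_U2 by auto
    have "(mat (fst p) :: cmat2) = mat (fst q)" by (rule inj_onD[OF f(3) eq m1 m2])
    then have "fst p = fst q" by (simp add: mat_inj)
    have "snd p = snd q" using \<open>\<tau> (snd p) = \<tau> (snd q)\<close> f(3) p q SU2_U2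
      unfolding inj_on_def by auto
    show "p = q" using \<open>fst p = fst q\<close> \<open>snd p = snd q\<close> by (simp add: prod_eq_iff)
  qed
  have surj: "\<tau>' ` (U1_set \<times> SU2_set) = U1_set \<times> SU2_set"
  proof
    show "\<tau>' ` (U1_set \<times> SU2_set) \<subseteq> U1_set \<times> SU2_set" using carr by blast
  next
    show "U1_set \<times> SU2_set \<subseteq> \<tau>' ` (U1_set \<times> SU2_set)"
    proof
      fix q assume q: "q \<in> U1_set \<times> SU2_set"
      obtain y B where qB: "q = (y, B)" "y \<in> U1_set" "B \<in> SU2_set" using q by auto
      obtain V W where VW: "V \<in> SU2_set" "W \<in> SU2_set" and B: "B = V ** (W ** (cadj V ** cadj W))"
        using comm_SU2[OF qB(3)] by blast
      obtain V' where V': "V' \<in> U2_set" "\<tau> V' = V" using f(4) SU2_U2[OF VW(1)] by (metis imageE)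
      obtain W' where W': "W' \<in> U2_set" "\<tau> W' = W" using f(4) SU2_U2[OF VW(2)] by (metis imageE)
      define A where "A = V' ** (W' ** (cadj V' ** cadj W'))"
      have A: "A \<in> SU2_set" unfolding A_def SU2_set_def using V' W' comm_det U2_mult U2_cadj by simp
      have tA: "\<tau> A = B" unfolding A_def B using tau_comm[OF t V'(1) W'(1)] V' W' by simp
      have my: "mat y \<in> U2_set" using qB mat_U2 by blast
      obtain M where M: "M \<in> U2_set" "\<tau> M = mat y" using f(4) my by (metis imageE)
      have Mc: "M ** xm = xm ** M" if xm: "xm \<in> U2_set" for xm
      proof -
        have "\<tau> (M ** xm) = \<tau> (xm ** M)"
          using f(2)[OF M(1) xm] f(2)[OF xm M(1)] M(2) mat_comm by metis
        then show ?thesis using f(3) U2_mult M(1) xm unfolding inj_on_def by blast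
      qed
      define z where "z = M $ 1 $ 1"
      have Mz: "M = mat z" unfolding z_def using central Mc by blast
      have z: "z \<in> U1_set" using M(1) Mz mat_U2 by blast
      have "w z = y" using wz[OF z] M(2) Mz by (simp add: mat_inj)
      then have "\<tau>' (z, A) = q" unfolding \<tau>'_def qB using tA by simp
      then show "q \<in> \<tau>' ` (U1_set \<times> SU2_set)" using z A by force
    qed
  qed
  have iso: "\<tau>' \<in> iso U1xSU2 U1xSU2"
    unfolding iso_def bij_betw_def UP_carrier using hom inj surj UP_carrier by simp
  have uniq: "\<sigma> p = \<tau>' p"
    if s: "\<sigma> \<in> iso U1xSU2 U1xSU2" and sr: "\<forall>p \<in> carrier U1xSU2. rho_hat (\<sigma> p) = \<tau> (rho_hat p)"
      and p: "p \<in> carrier U1xSU2" for \<sigma> p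
  proof -
    have sh: "\<sigma> \<in> hom U1xSU2 U1xSU2" using s by (simp add: iso_def)
    note hs = hom_UP[OF sh] and ht = hom_UP[OF hom]
    define e where "e q = fst (\<sigma> q) / fst (\<tau>' q)" for q
    have gnz: "fst (\<tau>' q) \<noteq> 0" if "q \<in> U1_set \<times> SU2_set" for q
      using carr[OF that] U1_nz by auto
    have fnz: "fst (\<sigma> q) \<noteq> 0" if "q \<in> U1_set \<times> SU2_set" for q
      using hs(1)[OF that] U1_nz by auto
    have emult: "e (fst q1 * fst q2, snd q1 ** snd q2) = e q1 * e q2"
      if "q1 \<in> U1_set \<times> SU2_set" "q2 \<in> U1_set \<times> SU2_set" for q1 q2
      unfolding e_def hs(2)[OF that] ht(2)[OF that] by simp
    have rel: "mat (fst (\<sigma> q)) ** snd (\<sigma> q) = mat (fst (\<tau>' q)) ** snd (\<tau>' q)"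
      if "q \<in> U1_set \<times> SU2_set" for q
      using sr rho that UP_carrier unfolding rho_hat_def by metis
    have esq: "e q * e q = 1" if q: "q \<in> U1_set \<times> SU2_set" for q
    proof -
      have "det (snd (\<sigma> q)) = 1" "det (snd (\<tau>' q)) = 1"
        using hs(1)[OF q] carr[OF q] by (auto simp: SU2_set_def)
      then have "fst (\<sigma> q) * fst (\<sigma> q) = fst (\<tau>' q) * fst (\<tau>' q)"
        using arg_cong[OF rel[OF q], of det] by (simp add: det_scal)
      then show ?thesis unfolding e_def using gnz[OF q] by (simp add: field_simps)
    qed
    have e1: "e (1, mat 1) = 1"
    proof -
      have o: "(1, mat 1) \<in> U1_set \<times> SU2_set" using U1_one SU2_one by simp
      have "e (1, mat 1) = e (1, mat 1) * e (1, mat 1)" using emult[OF o o] by simp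
      moreover have "e (1, mat 1) \<noteq> 0" unfolding e_def using gnz[OF o] fnz[OF o] by simp
      ultimately show ?thesis by (metis mult_cancel_left1)
    qed
    obtain z A where pz: "p = (z, A)" "z \<in> U1_set" "A \<in> SU2_set" using p UP_carrier by auto
    obtain V W where VW: "V \<in> SU2_set" "W \<in> SU2_set" and A: "A = V ** (W ** (cadj V ** cadj W))"
      using comm_SU2[OF pz(3)] by blast
    define u where "u = csqrt z"
    have u: "u \<in> U1_set" using pz(2) unfolding u_def U1_set_def by simp
    have uu: "u * u = z" unfolding u_def by (metis power2_csqrt power2_eq_square)
    have inv1: "e (1, Z) * e (1, cadj Z) = 1" if Z: "Z \<in> SU2_set" for Z
      using emult[of "(1, Z)" "(1, cadj Z)"] Z SU2_cadj U1_one U2_right[OF SU2_U2[OF Z]] e1 by simp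
    have m: "\<And>x Y. x \<in> SU2_set \<Longrightarrow> Y \<in> U1_set \<times> SU2_set \<Longrightarrow> fst Y = 1 \<Longrightarrow> e (1, x ** snd Y) = e (1, x) * e Y"
    proof -
      fix x Y assume x: "x \<in> SU2_set" and Y: "Y \<in> U1_set \<times> SU2_set" and Y1: "fst Y = 1"
      have "e (1 * fst Y, x ** snd Y) = e (1, x) * e Y" using emult[of "(1,x)" Y] x Y U1_one by simp
      then show "e (1, x ** snd Y) = e (1, x) * e Y" using Y1 by simp
    qed
    have c1: "(1, cadj W) \<in> U1_set \<times> SU2_set" using VW SU2_cadj U1_one by auto
    have c2: "(1, cadj V ** cadj W) \<in> U1_set \<times> SU2_set" using VW SU2_cadj SU2_mult U1_one by auto
    have c3: "(1, W ** (cadj V ** cadj W)) \<in> U1_set \<times> SU2_set" using VW SU2_cadj SU2_mult U1_one by auto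
    have c4: "(1, A) \<in> U1_set \<times> SU2_set" using pz U1_one by auto
    have eA: "e (1, A) = 1"
    proof -
      have "e (1, A) = e (1, V) * e (1, W ** (cadj V ** cadj W))" unfolding A using m[OF VW(1) c3 fst_conv] by simp
      also have "\<dots> = e (1, V) * (e (1, W) * (e (1, cadj V) * e (1, cadj W)))"
        using m[OF VW(2) c2 fst_conv] m[OF SU2_cadj[OF VW(1)] c1 fst_conv] by simp
      also have "\<dots> = (e (1, V) * e (1, cadj V)) * (e (1, W) * e (1, cadj W))" by (simp add: ac_simps)
      also have "\<dots> = 1" using inv1 VW by simp
      finally show ?thesis .
    qed
    have cu: "(u, mat 1) \<in> U1_set \<times> SU2_set" using u SU2_one by simp
    have cu2: "(u * u, mat 1) \<in> U1_set \<times> SU2_set" using U1_mult[OF u u] SU2_one by simp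
    have pp: "p = (fst (u * u, mat 1) * fst (1, A), snd (u * u, mat 1) ** snd (1, A))"
      using pz uu by simp
    have ep1: "e p = e (u * u, mat 1) * e (1, A)" using emult[OF cu2 c4] pp by metis
    have ep2: "e (u * u, mat 1) = e (u, mat 1) * e (u, mat 1)" using emult[OF cu cu] by simp
    have ep: "e p = 1" using ep1 ep2 eA esq[OF cu] by simp
    have p': "p \<in> U1_set \<times> SU2_set" using p UP_carrier by simp
    have fe: "fst (\<sigma> p) = fst (\<tau>' p)" using ep gnz[OF p'] unfolding e_def by simp
    have "mat (fst (\<tau>' p)) ** snd (\<sigma> p) = mat (fst (\<tau>' p)) ** snd (\<tau>' p)" using rel[OF p'] fe by simp
    then have "mat (1 / fst (\<tau>' p)) ** (mat (fst (\<tau>' p)) ** snd (\<sigma> p))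
             = mat (1 / fst (\<tau>' p)) ** (mat (fst (\<tau>' p)) ** snd (\<tau>' p))" by simp
    then have "snd (\<sigma> p) = snd (\<tau>' p)" using gnz[OF p'] by (simp add: matrix_mul_assoc mat_mat)
    then show ?thesis using fe by (simp add: prod_eq_iff)
  qed
  show ?thesis using iso rho uniq by blast
qed


end
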